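(* Let $P_0=(|P_0|,\preccurlyeq_0)$ be a finite poset with $|P_0|=\{x_1,\dots,x_{m_0}\}$ and let $S\subseteq|P_0|$ be a chain. Fix nonnegative integer values of $m_i$ for all $i$ with $x_i\notin S$. Then there are $2^{\mathrm{card}(S)}$ polynomials with rational coefficients in the variables $(m_i)_{x_i\in S}$, one for each assignment of parities to these variables, such that for every choice of nonnegative integers $(m_i)_{x_i\in S}$, $L_-(P_0;m_1,\dots,m_{m_0})$ equals the value of the polynomial corresponding to the parities of those $m_i$.
   Context: For nonnegative integers $m_1,\dots,m_{m_0}$ let $C_1,\dots,C_{m_0}$ be pairwise disjoint chains, $C_i$ being $x_{i,1}<\dots<x_{i,m_i}$. The lexicographic sum $P=P_0*(C_1,\dots,C_{m_0})$ is the poset on $\bigcup_i|C_i|$ with $x_{i,j}\preccurlyeq x_{i',j'}$ iff either $i\ne i'$ and $x_i\preccurlyeq_0x_{i'}$, or $i=i'$ and $j\le j'$. A linearization is a total order refining $\preccurlyeq$; relative to the reference ordering $x_{1,1},\dots,x_{1,m_1},x_{2,1},\dots,x_{m_0,m_{m_0}}$ of $|P|$, a linearization listing the elements as the reference ordering permuted by $\sigma$ is even or odd according to the parity of $\sigma$. $L_-(P_0;m_1,\dots,m_{m_0})$ is the number of even minus the number of odd linearizations of $P$. *)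

theory Defs
  imports Complex_Main "HOL-Combinatorics.Permutations"
begin

text \<open>The base poset P0 has ground set {0..<n} (index i stands for x_(i+1)), with order
  relation le.  Chain C_i has elements (i,j), j < m i.\<close>

definition lex_less :: "(nat \<Rightarrow> nat \<Rightarrow> bool) \<Rightarrow> nat \<times> nat \<Rightarrow> nat \<times> nat \<Rightarrow> bool" where
  "lex_less le x y \<longleftrightarrow>
     (fst x \<noteq> fst y \<and> le (fst x) (fst y)) \<or> (fst x = fst y \<and> snd x < snd y)"

definition ref_list :: "nat \<Rightarrow> (nat \<Rightarrow> nat) \<Rightarrow> (nat \<times> nat) list" where
  "ref_list n m = concat (map (\<lambda>i. map (\<lambda>j. (i, j)) [0..<m i]) [0..<n])"

definition linearizations ::
  "(nat \<Rightarrow> nat \<Rightarrow> bool) \<Rightarrow> nat \<Rightarrow> (nat \<Rightarrow> nat) \<Rightarrow> (nat \<times> nat) list set" where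
  "linearizations le n m = {ls. distinct ls \<and> set ls = set (ref_list n m) \<and>
     (\<forall>a b. a < b \<and> b < length ls \<longrightarrow> \<not> lex_less le (ls ! b) (ls ! a))}"

definition lin_perm :: "nat \<Rightarrow> (nat \<Rightarrow> nat) \<Rightarrow> (nat \<times> nat) list \<Rightarrow> nat \<Rightarrow> nat" where
  "lin_perm n m ls = (\<lambda>k. if k < length ls then (THE r. r < length (ref_list n m) \<and> ref_list n m ! r = ls ! k) else k)"

definition L_minus :: "(nat \<Rightarrow> nat \<Rightarrow> bool) \<Rightarrow> nat \<Rightarrow> (nat \<Rightarrow> nat) \<Rightarrow> int" where
  "L_minus le n m = (\<Sum>ls \<in> linearizations le n m. sign (lin_perm n m ls))"

definition poly_fun_on :: "nat set \<Rightarrow> ((nat \<Rightarrow> nat) \<Rightarrow> rat) \<Rightarrow> bool" where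
  "poly_fun_on S f \<longleftrightarrow> (\<exists>(d::nat) (c :: (nat \<Rightarrow> nat) \<Rightarrow> rat). \<forall>m.
     f m = (\<Sum>e \<in> {e. (\<forall>i. i \<notin> S \<longrightarrow> e i = 0) \<and> (\<forall>i\<in>S. e i \<le> d)}.
              c e * (\<Prod>i\<in>S. of_nat (m i) ^ e i)))"

end

theory Submission
  imports Defs
begin


lemma ref_list_Suc: "ref_list (Suc n) m = ref_list n m @ map (\<lambda>j. (n, j)) [0..<m n]"
  unfolding ref_list_def by simp

lemma ref_list_cong: "(\<forall>i<n. m i = m' i) \<Longrightarrow> ref_list n m = ref_list n m'"
  by (induction n) (auto simp: ref_list_Suc ref_list_def[of 0])

lemma set_ref: "set (ref_list n m) = {(i,j). i<n \<and> j < m i}"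
  by (induction n) (auto simp: ref_list_Suc ref_list_def[of 0] less_Suc_eq)

lemma distinct_ref: "distinct (ref_list n m)"
  by (induction n) (auto simp: ref_list_Suc ref_list_def[of 0] set_ref distinct_map inj_on_def)

lemma L_cong: assumes "\<forall>i<n. m i = m' i" shows "L_minus le n m = L_minus le n m'"
proof -
  have e: "ref_list n m = ref_list n m'" using ref_list_cong[OF assms] .
  show ?thesis unfolding L_minus_def linearizations_def lin_perm_def e ..
qed

lemma ref_split:
  assumes "i < n" "0 < m i" "\<forall>j. j \<noteq> i \<longrightarrow> m' j = m j" "m' i = m i - 1"
  shows "\<exists>A B. ref_list n m = A @ (i, m i - 1) # B \<and> ref_list n m' = A @ B
     \<and> length B = (\<Sum>j\<in>{i<..<n}. m j)"
  using assms
proof (induction n)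
  case 0 then show ?case by simp
next
  case (Suc n0)
  show ?case
  proof (cases "i < n0")
    case True
    then obtain A B where AB: "ref_list n0 m = A @ (i, m i - 1) # B" "ref_list n0 m' = A @ B"
      "length B = (\<Sum>j\<in>{i<..<n0}. m j)" using Suc by blast
    have "{i<..<Suc n0} = insert n0 {i<..<n0}" using True by auto
    then have "(\<Sum>j\<in>{i<..<Suc n0}. m j) = m n0 + (\<Sum>j\<in>{i<..<n0}. m j)" by simp
    moreover have "m' n0 = m n0" using Suc.prems True by simp
    ultimately show ?thesis using AB True
      by - (rule exI[of _ A], rule exI[of _ "B @ map (\<lambda>j. (n0, j)) [0..<m n0]"], simp add: ref_list_Suc)
  next
    case False
    then have i: "i = n0" using Suc.prems by simp
    have eq: "ref_list n0 m' = ref_list n0 m" using i Suc.prems by (intro ref_list_cong) simp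
    have "[0..<m i] = [0..<m i - 1] @ [m i - 1]" using Suc.prems
      by (metis Suc_diff_1 upt_Suc_append zero_le)
    then show ?thesis using i eq Suc.prems
      by - (rule exI[of _ "ref_list n0 m @ map (\<lambda>j. (n0, j)) [0..<m i - 1]"], rule exI[of _ "[]"], simp add: ref_list_Suc)
  qed
qed

definition idx :: "'a list \<Rightarrow> 'a \<Rightarrow> nat" where
  "idx xs y = (THE r. r < length xs \<and> xs ! r = y)"

lemma idx_nth: "distinct xs \<Longrightarrow> r < length xs \<Longrightarrow> idx xs (xs ! r) = r"
  unfolding idx_def by (rule the_equality) (auto simp: nth_eq_iff_index_eq)

lemma idx_in: "distinct xs \<Longrightarrow> y \<in> set xs \<Longrightarrow> idx xs y < length xs \<and> xs ! idx xs y = y"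
  by (metis idx_nth in_set_conv_nth)

lemma idx_ins:
  assumes "distinct (A @ x # B)" "y \<in> set (A @ B)"
  shows "idx (A @ x # B) y = (if idx (A @ B) y < length A then idx (A @ B) y else Suc (idx (A @ B) y))"
proof -
  have d: "distinct (A @ B)" using assms(1) by auto
  define r where "r = idx (A @ B) y"
  have r: "r < length (A @ B)" "(A @ B) ! r = y" using idx_in[OF d assms(2)] unfolding r_def by auto
  show ?thesis
  proof (cases "r < length A")
    case True
    then have "(A @ x # B) ! r = y" using r by (simp add: nth_append)
    then show ?thesis using idx_nth[OF assms(1), of r] True r unfolding r_def[symmetric] by simp
  next
    case False
    then have "(A @ x # B) ! Suc r = y" using r by (simp add: nth_append Suc_diff_le)
    then show ?thesis using idx_nth[OF assms(1), of "Suc r"] False r unfolding r_def[symmetric] by simp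
  qed
qed

definition rho :: "nat \<Rightarrow> nat \<Rightarrow> nat \<Rightarrow> nat" where
  "rho M r j = (if j < M then (if j < r then j else Suc j) else if j = M then r else j)"

lemma rho_M: "rho M M = id"
  unfolding rho_def by auto

lemma rho_step: "r < M \<Longrightarrow> rho M r = transpose r (Suc r) \<circ> rho M (Suc r)"
  unfolding rho_def by (auto simp: transpose_def)

lemma rho_sign: "r \<le> M \<Longrightarrow> permutation (rho M r) \<and> sign (rho M r) = (-1) ^ (M - r)"
proof (induction "M - r" arbitrary: r)
  case 0 then have "r = M" by simp
  then show ?case by (simp add: rho_M permutation_id)
next
  case (Suc k)
  then have r: "r < M" by simp
  have IH: "permutation (rho M (Suc r)) \<and> sign (rho M (Suc r)) = (-1) ^ (M - Suc r)"
    using Suc r by simp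
  have "M - r = Suc (M - Suc r)" using r by simp
  then show ?case using IH rho_step[OF r]
    by (simp add: permutation_compose permutation_swap_id sign_compose sign_swap_id)
qed


lemma lin_len: assumes "ls \<in> linearizations le n m" shows "length ls = length (ref_list n m)"
proof -
  have "distinct ls" "set ls = set (ref_list n m)" using assms unfolding linearizations_def by auto
  then show ?thesis using distinct_card[OF \<open>distinct ls\<close>] distinct_card[OF distinct_ref[of n m]] by simp
qed

lemma lin_finite: "finite (linearizations le n m)"
proof -
  have "linearizations le n m \<subseteq> {xs. set xs \<subseteq> set (ref_list n m) \<and> length xs \<le> length (ref_list n m)}"
  proof
    fix xs assume "xs \<in> linearizations le n m"
    then show "xs \<in> {xs. set xs \<subseteq> set (ref_list n m) \<and> length xs \<le> length (ref_list n m)}"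
      using lin_len[of xs] unfolding linearizations_def by auto
  qed
  then show ?thesis by (rule finite_subset[OF _ finite_lists_length_le[OF finite_set]])
qed

lemma lin_perm_permutes:
  assumes "ls \<in> linearizations le n m"
  shows "lin_perm n m ls permutes {..<length ls}"
proof -
  let ?R = "ref_list n m"
  have d0: "distinct ls" "set ls = set ?R" using assms unfolding linearizations_def by auto
  have d: "distinct ?R" "distinct ls" "set ls = set ?R" "length ls = length ?R"
    using d0 distinct_ref[of n m] lin_len[OF assms] by auto
  have lp: "lin_perm n m ls k = (if k < length ls then idx ?R (ls ! k) else k)" for k
    unfolding lin_perm_def idx_def by simp
  have inset: "ls ! k \<in> set ?R" if "k < length ls" for k
    using nth_mem[OF that] unfolding d(3) .
  have sub: "lin_perm n m ls ` {..<length ls} \<subseteq> {..<length ls}"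
  proof
    fix y assume "y \<in> lin_perm n m ls ` {..<length ls}"
    then obtain k where k: "k < length ls" "y = lin_perm n m ls k" by auto
    then have "y = idx ?R (ls ! k)" using lp by simp
    then show "y \<in> {..<length ls}" using idx_in[OF d(1) inset[OF k(1)]] d(4) by simp
  qed
  have inj: "inj_on (lin_perm n m ls) {..<length ls}"
  proof (rule inj_onI)
    fix a b assume ab: "a \<in> {..<length ls}" "b \<in> {..<length ls}" "lin_perm n m ls a = lin_perm n m ls b"
    then have "?R ! idx ?R (ls ! a) = ?R ! idx ?R (ls ! b)" using lp by simp
    then have "ls ! a = ls ! b" using idx_in[OF d(1) inset] ab by simp
    then show "a = b" using d(2) ab by (simp add: nth_eq_iff_index_eq)
  qed
  have "bij_betw (lin_perm n m ls) {..<length ls} {..<length ls}"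
    using endo_inj_surj[OF _ sub inj] inj by (simp add: bij_betw_def)
  then show ?thesis by (rule bij_imp_permutes) (simp add: lp)
qed

lemma lin_perm_permutation: "ls \<in> linearizations le n m \<Longrightarrow> permutation (lin_perm n m ls)"
  by (rule permutes_imp_permutation[OF finite_lessThan lin_perm_permutes])



lemma lin_snoc:
  assumes "i < n" "0 < m i" "\<forall>j. j \<noteq> i \<longrightarrow> m' j = m j" "m' i = m i - 1"
    and ls': "ls' \<in> linearizations le n m'" and mx: "\<forall>j<n. j \<noteq> i \<and> 0 < m j \<longrightarrow> \<not> le i j"
  shows "ls' @ [(i, m i - 1)] \<in> linearizations le n m"
proof -
  obtain A B where AB: "ref_list n m = A @ (i, m i - 1) # B" "ref_list n m' = A @ B"
    using ref_split[OF assms(1-4)] by blast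
  have dd: "distinct (A @ (i, m i - 1) # B)" using distinct_ref[of n m] unfolding AB(1) .
  have l': "distinct ls'" "set ls' = set (A @ B)" "\<forall>a b. a < b \<and> b < length ls' \<longrightarrow> \<not> lex_less le (ls' ! b) (ls' ! a)"
    using ls' AB unfolding linearizations_def by auto
  have xn: "(i, m i - 1) \<notin> set ls'" using l'(2) dd by auto
  have ord: "\<not> lex_less le ((ls' @ [(i, m i - 1)]) ! b) ((ls' @ [(i, m i - 1)]) ! a)"
    if "a < b" "b < length (ls' @ [(i, m i - 1)])" for a b
  proof (cases "b < length ls'")
    case True
    then show ?thesis using l'(3) that by (simp add: nth_append)
  next
    case False
    then have b: "b = length ls'" using that by simp
    have "ls' ! a \<in> set ls'" using that b by (simp add: nth_mem)
    then have "ls' ! a \<in> set (ref_list n m')" using l'(2) AB by simp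
    then obtain j k where jk: "ls' ! a = (j, k)" "j < n" "k < m' j" unfolding set_ref by auto
    have "\<not> lex_less le (i, m i - 1) (j, k)"
    proof
      assume "lex_less le (i, m i - 1) (j, k)"
      then consider "j \<noteq> i" "le i j" | "j = i" "m i - 1 < k" unfolding lex_less_def by auto
      then show False
      proof cases
        case 1 then show False using mx jk assms(3) by auto
      next
        case 2 then show False using jk assms(4) by simp
      qed
    qed
    then show ?thesis using b that jk by (simp add: nth_append)
  qed
  have "distinct (ls' @ [(i, m i - 1)])" using l'(1) xn by simp
  moreover have "set (ls' @ [(i, m i - 1)]) = set (ref_list n m)" using l'(2) unfolding AB(1) by auto
  ultimately show ?thesis unfolding linearizations_def mem_Collect_eq using ord by blast
qed



lemma lin_butlast:
  assumes "i < n" "0 < m i" "\<forall>j. j \<noteq> i \<longrightarrow> m' j = m j" "m' i = m i - 1"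
    and ls: "ls' @ [(i, m i - 1)] \<in> linearizations le n m"
  shows "ls' \<in> linearizations le n m'"
proof -
  obtain A B where AB: "ref_list n m = A @ (i, m i - 1) # B" "ref_list n m' = A @ B"
    using ref_split[OF assms(1-4)] by blast
  have dd: "distinct (A @ (i, m i - 1) # B)" using distinct_ref[of n m] unfolding AB(1) .
  have l: "distinct (ls' @ [(i, m i - 1)])" "set (ls' @ [(i, m i - 1)]) = set (A @ (i, m i - 1) # B)"
      "\<forall>a b. a < b \<and> b < length (ls' @ [(i, m i - 1)]) \<longrightarrow> \<not> lex_less le ((ls' @ [(i, m i - 1)]) ! b) ((ls' @ [(i, m i - 1)]) ! a)"
    using ls AB unfolding linearizations_def by auto
  have "set ls' = set (A @ B)"
  proof -
    have "set ls' = set (ls' @ [(i, m i - 1)]) - {(i, m i - 1)}" using l(1) by auto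
    also have "\<dots> = set (A @ B)" using l(2) dd by auto
    finally show ?thesis .
  qed
  moreover have "\<forall>a b. a < b \<and> b < length ls' \<longrightarrow> \<not> lex_less le (ls' ! b) (ls' ! a)"
  proof (intro allI impI)
    fix a b assume ab: "a < b \<and> b < length ls'"
    then have "(ls' @ [(i, m i - 1)]) ! b = ls' ! b" "(ls' @ [(i, m i - 1)]) ! a = ls' ! a"
      by (simp_all add: nth_append)
    then show "\<not> lex_less le (ls' ! b) (ls' ! a)" using l(3) ab by (metis length_append_singleton less_SucI)
  qed
  moreover have "distinct ls'" using l(1) by simp
  ultimately show ?thesis unfolding linearizations_def mem_Collect_eq AB(2) by blast
qed



lemma lin_last:
  assumes ls: "ls \<in> linearizations le n m" "ls \<noteq> []"
  shows "\<exists>i ls'. ls = ls' @ [(i, m i - 1)] \<and> i < n \<and> 0 < m i \<and> (\<forall>j<n. j \<noteq> i \<and> 0 < m j \<longrightarrow> \<not> le i j)"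
proof -
  obtain ls' y where y: "ls = ls' @ [y]" using ls(2) by (metis rev_exhaust)
  have l: "distinct ls" "set ls = set (ref_list n m)" "\<forall>a b. a < b \<and> b < length ls \<longrightarrow> \<not> lex_less le (ls ! b) (ls ! a)"
    using ls unfolding linearizations_def by auto
  obtain i k where ik0: "y = (i, k)" by (cases y)
  have "y \<in> set (ref_list n m)" unfolding l(2)[symmetric] y by simp
  then have ik: "i < n" "k < m i" unfolding ik0 set_ref by auto
  have last: "ls ! length ls' = (i, k)" using y ik0 by simp
  have len: "length ls' < length ls" using y by simp
  have early: "\<exists>a < length ls'. ls ! a = z" if "z \<in> set (ref_list n m)" "z \<noteq> (i, k)" for z
  proof -
    have "z \<in> set ls" using that(1) l(2) by simp
    then have "z \<in> set ls'" using that(2) y ik0 by simp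
    then obtain a where "a < length ls'" "ls' ! a = z" by (meson in_set_conv_nth)
    then show ?thesis using y by (intro exI[of _ a]) (simp add: nth_append)
  qed
  have k: "k = m i - 1"
  proof (rule ccontr)
    assume "k \<noteq> m i - 1"
    then have kl: "k < m i - 1" using ik by simp
    have "(i, m i - 1) \<in> set (ref_list n m)" using ik unfolding set_ref by auto
    moreover have "(i, m i - 1) \<noteq> (i, k)" using kl by simp
    ultimately obtain a where a: "a < length ls'" "ls ! a = (i, m i - 1)" using early by blast
    have "lex_less le (ls ! length ls') (ls ! a)" unfolding last a(2) lex_less_def using kl by simp
    then show False using l(3) a(1) len by blast
  qed
  have mx: "\<forall>j<n. j \<noteq> i \<and> 0 < m j \<longrightarrow> \<not> le i j"
  proof (intro allI impI)
    fix j assume j: "j < n" "j \<noteq> i \<and> 0 < m j"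
    then have "(j, 0) \<in> set (ref_list n m)" unfolding set_ref by auto
    moreover have "(j, 0) \<noteq> (i, k)" using j by simp
    ultimately obtain a where a: "a < length ls'" "ls ! a = (j, 0)" using early by blast
    show "\<not> le i j"
    proof
      assume "le i j"
      then have "lex_less le (ls ! length ls') (ls ! a)" unfolding last a(2) lex_less_def using j by simp
      then show False using l(3) a(1) len by blast
    qed
  qed
  have "ls = ls' @ [(i, m i - 1)]" using y ik0 k by simp
  then show ?thesis using ik mx by (intro exI[of _ i] exI[of _ ls']) simp
qed



lemma perm_snoc:
  assumes R: "ref_list n m = A @ x # B" "ref_list n m' = A @ B" and ls': "ls' \<in> linearizations le n m'"
  shows "sign (lin_perm n m (ls' @ [x])) = (-1) ^ length B * sign (lin_perm n m' ls')"
proof -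
  have dd: "distinct (A @ x # B)" using distinct_ref[of n m] unfolding R(1) .
  have dd': "distinct (A @ B)" using distinct_ref[of n m'] unfolding R(2) .
  have len: "length ls' = length (A @ B)" using lin_len[OF ls'] unfolding R(2) .
  have st: "set ls' = set (A @ B)" using ls' unfolding linearizations_def R(2) by simp
  let ?M = "length ls'" and ?r = "length A"
  have lp: "lin_perm n m (ls' @ [x]) k = (if k < Suc ?M then idx (A @ x # B) ((ls' @ [x]) ! k) else k)" for k
    unfolding lin_perm_def idx_def R(1) by simp
  have lp': "lin_perm n m' ls' k = (if k < ?M then idx (A @ B) (ls' ! k) else k)" for k
    unfolding lin_perm_def idx_def R(2) by simp
  have eq: "lin_perm n m (ls' @ [x]) = rho ?M ?r \<circ> lin_perm n m' ls'"
  proof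
    fix k
    consider "k < ?M" | "k = ?M" | "k > ?M" by linarith
    then show "lin_perm n m (ls' @ [x]) k = (rho ?M ?r \<circ> lin_perm n m' ls') k"
    proof cases
      case 1
      have mem: "ls' ! k \<in> set (A @ B)" using 1 st nth_mem by metis
      have lt: "idx (A @ B) (ls' ! k) < ?M" using idx_in[OF dd' mem] len by simp
      have "lin_perm n m (ls' @ [x]) k = idx (A @ x # B) (ls' ! k)" using lp 1 by (simp add: nth_append)
      also have "\<dots> = (if idx (A @ B) (ls' ! k) < ?r then idx (A @ B) (ls' ! k) else Suc (idx (A @ B) (ls' ! k)))"
        by (rule idx_ins[OF dd mem])
      finally show ?thesis using lp' 1 lt unfolding rho_def by simp
    next
      case 2
      have "(A @ x # B) ! ?r = x" by simp
      then have "idx (A @ x # B) x = ?r" using idx_nth[OF dd, of ?r] by simp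
      then show ?thesis using lp lp' 2 unfolding rho_def by simp
    next
      case 3
      then show ?thesis using lp lp' unfolding rho_def by simp
    qed
  qed
  have rs: "permutation (rho ?M ?r) \<and> sign (rho ?M ?r) = (-1) ^ (?M - ?r)"
    by (rule rho_sign) (simp add: len)
  have "?M - ?r = length B" using len by simp
  then show ?thesis unfolding eq using rs lin_perm_permutation[OF ls'] by (simp add: sign_compose)
qed

lemma L_base: assumes "\<forall>i<n. m i = 0" shows "L_minus le n m = 1"
proof -
  have "set (ref_list n m) = {}" unfolding set_ref using assms by auto
  then have R: "ref_list n m = []" by simp
  have "linearizations le n m = {[]}" unfolding linearizations_def R by auto
  moreover have "lin_perm n m [] = id" unfolding lin_perm_def by auto
  ultimately show ?thesis unfolding L_minus_def by simp
qed

theorem L_rec: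
  assumes sup: "\<exists>i<n. 0 < m i"
  shows "L_minus le n m = (\<Sum>i\<in>{i. i < n \<and> 0 < m i \<and> (\<forall>j<n. j \<noteq> i \<and> 0 < m j \<longrightarrow> \<not> le i j)}.
            (-1) ^ (\<Sum>j\<in>{i<..<n}. m j) * L_minus le n (m(i := m i - 1)))"
proof -
  define Mx where "Mx = {i. i < n \<and> 0 < m i \<and> (\<forall>j<n. j \<noteq> i \<and> 0 < m j \<longrightarrow> \<not> le i j)}"
  define f where "f = (\<lambda>i ls'. ls' @ [(i, m i - 1 :: nat)])"
  define Li where "Li = (\<lambda>i. linearizations le n (m(i := m i - 1)))"
  have upd: "\<forall>j. j \<noteq> i \<longrightarrow> (m(i := m i - 1)) j = m j" "(m(i := m i - 1)) i = m i - 1" for i by simp_all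
  have lin_eq: "linearizations le n m = (\<Union>i\<in>Mx. f i ` Li i)"
  proof
    show "linearizations le n m \<subseteq> (\<Union>i\<in>Mx. f i ` Li i)"
    proof
      fix ls assume ls: "ls \<in> linearizations le n m"
      have "ls \<noteq> []"
      proof
        assume "ls = []"
        then have "set (ref_list n m) = {}" using ls unfolding linearizations_def by auto
        then show False using sup unfolding set_ref by auto
      qed
      then obtain i ls' where i: "ls = ls' @ [(i, m i - 1)]" "i < n" "0 < m i" "\<forall>j<n. j \<noteq> i \<and> 0 < m j \<longrightarrow> \<not> le i j"
        using lin_last[OF ls] by blast
      have "ls' \<in> Li i" unfolding Li_def
        by (rule lin_butlast[OF i(2,3) upd]) (use ls i(1) in simp)
      then show "ls \<in> (\<Union>i\<in>Mx. f i ` Li i)" using i unfolding Mx_def f_def by blast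
    qed
  next
    show "(\<Union>i\<in>Mx. f i ` Li i) \<subseteq> linearizations le n m"
    proof
      fix ls assume "ls \<in> (\<Union>i\<in>Mx. f i ` Li i)"
      then obtain i ls' where i: "i \<in> Mx" "ls' \<in> Li i" "ls = f i ls'" by blast
      show "ls \<in> linearizations le n m" unfolding i(3) f_def
        by (rule lin_snoc[OF _ _ upd]) (use i(1,2) in \<open>simp_all add: Mx_def Li_def fun_upd_def\<close>)
    qed
  qed
  have finMx: "finite Mx" unfolding Mx_def by simp
  have disj: "f i ` Li i \<inter> f j ` Li j = {}" if "i \<in> Mx" "j \<in> Mx" "i \<noteq> j" for i j
    using that unfolding f_def by auto
  have injf: "inj_on (f i) (Li i)" for i unfolding f_def by (rule inj_onI) simp
  have inner: "(\<Sum>ls\<in>f i ` Li i. sign (lin_perm n m ls)) = (-1) ^ (\<Sum>j\<in>{i<..<n}. m j) * L_minus le n (m(i := m i - 1))"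
    if "i \<in> Mx" for i
  proof -
    have i: "i < n" "0 < m i" using that unfolding Mx_def by auto
    obtain A B where AB: "ref_list n m = A @ (i, m i - 1) # B" "ref_list n (m(i := m i - 1)) = A @ B"
      "length B = (\<Sum>j\<in>{i<..<n}. m j)" using ref_split[OF i upd] by blast
    have "(\<Sum>ls\<in>f i ` Li i. sign (lin_perm n m ls)) = (\<Sum>ls'\<in>Li i. sign (lin_perm n m (f i ls')))"
      by (rule sum.reindex[OF injf, unfolded comp_def])
    also have "\<dots> = (\<Sum>ls'\<in>Li i. (-1) ^ length B * sign (lin_perm n (m(i := m i - 1)) ls'))"
      unfolding f_def Li_def by (intro sum.cong refl perm_snoc[OF AB(1,2)])
    also have "\<dots> = (-1) ^ length B * L_minus le n (m(i := m i - 1))"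
      unfolding L_minus_def Li_def by (simp add: sum_distrib_left)
    finally show ?thesis unfolding AB(3) .
  qed
  have "L_minus le n m = (\<Sum>i\<in>Mx. \<Sum>ls\<in>f i ` Li i. sign (lin_perm n m ls))"
    unfolding L_minus_def lin_eq
    by (rule sum.UNION_disjoint[OF finMx]) (use disj in \<open>auto simp: Li_def lin_finite\<close>)
  also have "\<dots> = (\<Sum>i\<in>Mx. (-1) ^ (\<Sum>j\<in>{i<..<n}. m j) * L_minus le n (m(i := m i - 1)))"
    by (rule sum.cong[OF refl inner])
  finally show ?thesis unfolding Mx_def .
qed



inductive pf :: "nat set \<Rightarrow> ((nat \<Rightarrow> nat) \<Rightarrow> rat) \<Rightarrow> bool" for T where
  pf_const: "pf T (\<lambda>m. c)"
| pf_add: "pf T f \<Longrightarrow> pf T g \<Longrightarrow> pf T (\<lambda>m. f m + g m)"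
| pf_var: "pf T f \<Longrightarrow> i \<in> T \<Longrightarrow> pf T (\<lambda>m. of_nat (m i) * f m)"

lemma pf_scale: "pf T f \<Longrightarrow> pf T (\<lambda>m. c * f m)"
proof (induction rule: pf.induct)
  case (pf_const c') then show ?case using pf.pf_const by auto
next
  case (pf_add f g) then show ?case using pf.pf_add[OF pf_add.IH] by (simp add: distrib_left)
next
  case (pf_var f i) then show ?case using pf.pf_var[OF pf_var.IH pf_var.hyps(2)] by (simp add: mult.left_commute)
qed

lemma pf_mult: "pf T f \<Longrightarrow> pf T g \<Longrightarrow> pf T (\<lambda>m. f m * g m)"
proof (induction rule: pf.induct)
  case (pf_const c) then show ?case using pf_scale by auto
next
  case (pf_add f1 f2) then show ?case using pf.pf_add[OF pf_add.IH] by (simp add: distrib_right)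
next
  case (pf_var f i) then show ?case using pf.pf_var[OF pf_var.IH] by (simp add: mult.assoc)
qed

lemma pf_varx: "i \<in> T \<Longrightarrow> pf T (\<lambda>m. of_nat (m i))"
  using pf_var[OF pf_const[of T 1]] by simp

lemma pf_minus: "pf T f \<Longrightarrow> pf T g \<Longrightarrow> pf T (\<lambda>m. f m - g m)"
  using pf_add[OF _ pf_scale[of T g "-1"]] by simp

lemma pf_sum: "finite A \<Longrightarrow> (\<And>a. a \<in> A \<Longrightarrow> pf T (f a)) \<Longrightarrow> pf T (\<lambda>m. \<Sum>a\<in>A. f a m)"
proof (induction A rule: finite_induct)
  case empty then show ?case using pf_const[of T 0] by simp
next
  case (insert x F) then show ?case using pf_add[of T "f x" "\<lambda>m. \<Sum>a\<in>F. f a m"] by simp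
qed

lemma pf_pow: "pf T f \<Longrightarrow> pf T (\<lambda>m. f m ^ k)"
  by (induction k) (auto intro: pf_mult pf_const)

lemma pf_mono: "pf T f \<Longrightarrow> T \<subseteq> T' \<Longrightarrow> pf T' f"
  by (induction rule: pf.induct) (auto intro: pf.intros)

lemma pf_dep: "pf T f \<Longrightarrow> (\<forall>i\<in>T. m i = m' i) \<Longrightarrow> f m = f m'"
  by (induction rule: pf.induct) auto

lemma pf_subst:
  fixes a b :: rat
  assumes "pf T f"
  shows "\<exists>g. pf T g \<and> (\<forall>v w. of_nat w = a * of_nat (v s) + b \<longrightarrow> f (v(s:=w)) = g v)"
  using assms
proof (induction rule: pf.induct)
  case (pf_const c) then show ?case by (auto intro: pf.pf_const)
next
  case (pf_add f g)
  then obtain f' g' where "pf T f'" "pf T g'" "\<forall>v w. of_nat w = a * of_nat (v s) + b \<longrightarrow> f (v(s:=w)) = f' v"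
      "\<forall>v w. of_nat w = a * of_nat (v s) + b \<longrightarrow> g (v(s:=w)) = g' v" by blast
  then show ?case by (intro exI[of _ "\<lambda>m. f' m + g' m"]) (metis (no_types, lifting) pf.pf_add)
next
  case (pf_var f i)
  then obtain f' where f': "pf T f'" "\<forall>v w. of_nat w = a * of_nat (v s) + b \<longrightarrow> f (v(s:=w)) = f' v" by blast
  show ?case
  proof (cases "i = s")
    case True
    have "pf T (\<lambda>m. a * (of_nat (m s) * f' m) + b * f' m)"
      using pf.pf_var[OF f'(1), of s] f'(1) pf_var.hyps True by (auto intro!: pf_add pf_scale)
    moreover have "of_nat ((v(s:=w)) i) * f (v(s:=w)) = a * (of_nat (v s) * f' v) + b * f' v"
      if "of_nat w = a * of_nat (v s) + b" for v w
    proof -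
      have "f (v(s:=w)) = f' v" using f' that by blast
      then show ?thesis using that True by (simp add: algebra_simps)
    qed
    ultimately show ?thesis by blast
  next
    case False
    have "pf T (\<lambda>m. of_nat (m i) * f' m)" using f' pf_var.hyps by (auto intro: pf.pf_var)
    moreover have "of_nat ((v(s:=w)) i) * f (v(s:=w)) = of_nat (v i) * f' v"
      if "of_nat w = a * of_nat (v s) + b" for v w
    proof -
      have "f (v(s:=w)) = f' v" using f' that by blast
      then show ?thesis using that False by simp
    qed
    ultimately show ?thesis by blast
  qed
qed



lemma binom_expand: "(of_nat K + 1 :: rat) ^ Suc k = of_nat K ^ Suc k + (\<Sum>j\<le>k. of_nat (Suc k choose j) * of_nat K ^ j)"
proof -
  have "(of_nat K + 1 :: rat) ^ Suc k = (\<Sum>j\<le>Suc k. of_nat (Suc k choose j) * of_nat K ^ j)"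
    by (subst binomial_ring) simp
  also have "\<dots> = of_nat K ^ Suc k + (\<Sum>j\<le>k. of_nat (Suc k choose j) * of_nat K ^ j)"
    by (subst sum.atMost_Suc) simp
  finally show ?thesis .
qed

lemma pow_identity: "(of_nat K :: rat) ^ Suc k = (\<Sum>j\<le>k. of_nat (Suc k choose j) * (\<Sum>r<K. of_nat r ^ j))"
proof (induction K)
  case 0 then show ?case by simp
next
  case (Suc K)
  have "(of_nat (Suc K) :: rat) ^ Suc k = of_nat K ^ Suc k + (\<Sum>j\<le>k. of_nat (Suc k choose j) * of_nat K ^ j)"
    using binom_expand[of K k] by (simp add: add.commute)
  also have "\<dots> = (\<Sum>j\<le>k. of_nat (Suc k choose j) * (\<Sum>r<Suc K. of_nat r ^ j))"
    using Suc by (simp add: sum.distrib distrib_left)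
  finally show ?case .
qed

lemma powsum: "s \<in> T \<Longrightarrow> \<exists>g. pf T g \<and> (\<forall>v. g v = (\<Sum>r<v s. (of_nat r :: rat) ^ k))"
proof (induction k rule: less_induct)
  case (less k)
  then have "\<forall>j. \<exists>g. j < k \<longrightarrow> pf T g \<and> (\<forall>v. g v = (\<Sum>r<v s. (of_nat r :: rat) ^ j))" by blast
  then obtain G where G: "\<And>j. j < k \<Longrightarrow> pf T (G j) \<and> (\<forall>v. G j v = (\<Sum>r<v s. (of_nat r :: rat) ^ j))"
    by metis
  define g where "g = (\<lambda>v. (of_nat (v s) ^ Suc k - (\<Sum>j<k. of_nat (Suc k choose j) * G j v)) / of_nat (Suc k) :: rat)"
  have "pf T g" unfolding g_def divide_inverse
    by (subst mult.commute, intro pf_scale pf_minus pf_pow pf_varx less.prems pf_sum) (auto intro!: pf_scale G[THEN conjunct1])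
  moreover have "g v = (\<Sum>r<v s. (of_nat r :: rat) ^ k)" for v
  proof -
    have "(of_nat (v s) :: rat) ^ Suc k = (\<Sum>j\<le>k. of_nat (Suc k choose j) * (\<Sum>r<v s. of_nat r ^ j))"
      by (rule pow_identity)
    also have "\<dots> = (\<Sum>j<k. of_nat (Suc k choose j) * G j v) + of_nat (Suc k) * (\<Sum>r<v s. of_nat r ^ k)"
      using G by (simp add: lessThan_Suc_atMost[symmetric])
    finally show ?thesis unfolding g_def by (simp add: field_simps)
  qed
  ultimately show ?case by blast
qed

definition indep :: "nat \<Rightarrow> ((nat \<Rightarrow> nat) \<Rightarrow> rat) \<Rightarrow> bool" where
  "indep s f \<longleftrightarrow> (\<forall>v v'. (\<forall>i. i \<noteq> s \<longrightarrow> v i = v' i) \<longrightarrow> f v = f v')"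

lemma indep_upd: "indep s f \<Longrightarrow> f (v(s:=w)) = f v"
  unfolding indep_def by (metis fun_upd_other)

lemma pf_decomp:
  assumes "pf T f"
  shows "\<exists>D h. (\<forall>j. pf T (h j)) \<and> (\<forall>j. indep s (h j)) \<and> (\<forall>j\<ge>D. h j = (\<lambda>_. 0))
     \<and> (\<forall>v. f v = (\<Sum>j<D. of_nat (v s) ^ j * h j v))"
  using assms
proof (induction rule: pf.induct)
  case (pf_const c)
  show ?case
    by (rule exI[of _ 1], rule exI[of _ "\<lambda>j. if j = 0 then (\<lambda>_. c) else (\<lambda>_. 0)"]) (auto intro: pf.pf_const simp: indep_def)
next
  case (pf_add f g)
  then obtain D1 h1 D2 h2 where
    h1: "\<forall>j. pf T (h1 j)" "\<forall>j. indep s (h1 j)" "\<forall>j\<ge>D1. h1 j = (\<lambda>_. 0)" "\<forall>v. f v = (\<Sum>j<D1. of_nat (v s) ^ j * h1 j v)"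
    and h2: "\<forall>j. pf T (h2 j)" "\<forall>j. indep s (h2 j)" "\<forall>j\<ge>D2. h2 j = (\<lambda>_. 0)" "\<forall>v. g v = (\<Sum>j<D2. of_nat (v s) ^ j * h2 j v)"
    by blast
  have e1: "(\<Sum>j<D1. of_nat (v s) ^ j * h1 j v) = (\<Sum>j<D1+D2. of_nat (v s) ^ j * h1 j v)" for v
    by (rule sum.mono_neutral_left) (use h1(3) in auto)
  have e2: "(\<Sum>j<D2. of_nat (v s) ^ j * h2 j v) = (\<Sum>j<D1+D2. of_nat (v s) ^ j * h2 j v)" for v
    by (rule sum.mono_neutral_left) (use h2(3) in auto)
  have ind: "indep s (\<lambda>v. h1 j v + h2 j v)" for j
    using h1(2) h2(2) unfolding indep_def by (metis (no_types, lifting))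
  show ?case
    apply (rule exI[of _ "D1+D2"], rule exI[of _ "\<lambda>j v. h1 j v + h2 j v"])
    using h1 h2 e1 e2 ind by (simp_all add: pf.pf_add sum.distrib distrib_left)
next
  case (pf_var f i)
  then obtain D h where
    h: "\<forall>j. pf T (h j)" "\<forall>j. indep s (h j)" "\<forall>j\<ge>D. h j = (\<lambda>_. 0)" "\<forall>v. f v = (\<Sum>j<D. of_nat (v s) ^ j * h j v)"
    by blast
  show ?case
  proof (cases "i = s")
    case False
    show ?thesis
      apply (rule exI[of _ D], rule exI[of _ "\<lambda>j v. of_nat (v i) * h j v"])
      using h False pf_var.hyps by (auto intro: pf.pf_var simp: sum_distrib_left algebra_simps indep_def)
  next
    case True
    define h' where "h' = (\<lambda>j. if j = 0 then (\<lambda>_. 0) else h (j - 1))"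
    have "(\<Sum>j<Suc D. of_nat (v s) ^ j * h' j v) = (\<Sum>j<D. of_nat (v s) ^ Suc j * h j v)" for v :: "nat \<Rightarrow> nat"
      unfolding h'_def by (subst sum.lessThan_Suc_shift) simp
    then show ?thesis
      apply (intro exI[of _ "Suc D"] exI[of _ h'])
      using h True unfolding h'_def by (auto intro: pf.pf_const simp: sum_distrib_left algebra_simps indep_def)
  qed
qed

lemma faulhaber:
  assumes "pf T f" "s \<in> T"
  shows "\<exists>g. pf T g \<and> (\<forall>v. g v = (\<Sum>r<v s. f (v(s:=r))))"
proof -
  obtain D h where h: "\<forall>j. pf T (h j)" "\<forall>j. indep s (h j)" "\<forall>v. f v = (\<Sum>j<D. of_nat (v s) ^ j * h j v)"
    using pf_decomp[OF assms(1), of s] by blast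
  have "\<forall>j. \<exists>g. pf T g \<and> (\<forall>v. g v = (\<Sum>r<v s. (of_nat r :: rat) ^ j))" using powsum[OF assms(2)] by blast
  then obtain G where G: "\<And>j. pf T (G j)" "\<And>j v. G j v = (\<Sum>r<v s. (of_nat r :: rat) ^ j)" by metis
  have "(\<Sum>r<v s. f (v(s:=r))) = (\<Sum>j<D. G j v * h j v)" for v
  proof -
    have "(\<Sum>r<v s. f (v(s:=r))) = (\<Sum>r<v s. \<Sum>j<D. of_nat r ^ j * h j v)"
      using h(2,3) by (intro sum.cong) (auto simp: indep_upd)
    also have "\<dots> = (\<Sum>j<D. G j v * h j v)"
      by (subst sum.swap) (simp add: G(2) sum_distrib_right)
    finally show ?thesis .
  qed
  moreover have "pf T (\<lambda>v. \<Sum>j<D. G j v * h j v)" by (intro pf_sum pf_mult G h[rule_format]) auto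
  ultimately show ?thesis by (intro exI[of _ "\<lambda>v. \<Sum>j<D. G j v * h j v"]) auto
qed



lemma faul_aff:
  fixes \<alpha> \<beta> :: rat
  assumes "pf T g" "s \<in> T"
  shows "\<exists>G. pf T G \<and> (\<forall>v K. of_nat K = \<alpha> * of_nat (v s) + \<beta> \<longrightarrow> G v = (\<Sum>r<K. g (v(s := 2*r + c))))"
proof -
  obtain g' where g': "pf T g'" "\<forall>v w. of_nat w = (2::rat) * of_nat (v s) + of_nat c \<longrightarrow> g (v(s:=w)) = g' v"
    using pf_subst[OF assms(1), of 2 s "of_nat c"] by blast
  have g'': "g (v(s := 2*r + c)) = g' (v(s:=r))" for v r
    using spec[OF spec[OF g'(2), of "v(s:=r)"], of "2*r+c"] by simp
  obtain F where F: "pf T F" "\<forall>u. F u = (\<Sum>r<u s. g' (u(s:=r)))"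
    using faulhaber[OF g'(1) assms(2)] by blast
  obtain G where G: "pf T G" "\<forall>v w. of_nat w = \<alpha> * of_nat (v s) + \<beta> \<longrightarrow> F (v(s:=w)) = G v"
    using pf_subst[OF F(1), of \<alpha> s \<beta>] by blast
  show ?thesis
  proof (intro exI[of _ G] conjI allI impI)
    fix v K assume "of_nat K = \<alpha> * of_nat (v s) + \<beta>"
    then have "G v = F (v(s:=K))" using G by simp
    also have "\<dots> = (\<Sum>r<K. g (v(s := 2*r + c)))" using F(2) g'' by simp
    finally show "G v = (\<Sum>r<K. g (v(s := 2*r + c)))" .
  qed (rule G(1))
qed

definition polyE :: "nat set \<Rightarrow> ((nat \<Rightarrow> nat) \<Rightarrow> rat) \<Rightarrow> bool" where
  "polyE T f \<longleftrightarrow> (\<exists>E c. finite E \<and> (\<forall>e\<in>E. \<forall>i. i \<notin> T \<longrightarrow> e i = 0) \<and>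
      (\<forall>m. f m = (\<Sum>e\<in>E. c e * (\<Prod>i\<in>T. of_nat (m i) ^ e i))))"

lemma sum_if_sub: "finite B \<Longrightarrow> A \<subseteq> B \<Longrightarrow> (\<Sum>e\<in>B. (if e \<in> A then c e else 0) * X e) = (\<Sum>e\<in>A. c e * (X e :: rat))"
proof -
  assume "finite B" "A \<subseteq> B"
  have "(\<Sum>e\<in>B. (if e \<in> A then c e else 0) * X e) = (\<Sum>e\<in>B. if e \<in> A then c e * X e else 0)"
    by (intro sum.cong) auto
  also have "\<dots> = (\<Sum>e\<in>B \<inter> A. c e * X e)" using \<open>finite B\<close> by (simp add: sum.inter_restrict)
  also have "B \<inter> A = A" using \<open>A \<subseteq> B\<close> by auto
  finally show ?thesis .
qed

lemma pf_polyE: "pf T f \<Longrightarrow> finite T \<Longrightarrow> polyE T f"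
proof (induction rule: pf.induct)
  case (pf_const c)
  show ?case unfolding polyE_def
    by (rule exI[of _ "{\<lambda>_. 0}"], rule exI[of _ "\<lambda>_. c"]) simp
next
  case (pf_add f g)
  then obtain E1 c1 E2 c2 where 1: "finite E1" "\<forall>e\<in>E1. \<forall>i. i \<notin> T \<longrightarrow> e i = 0"
      "\<forall>m. f m = (\<Sum>e\<in>E1. c1 e * (\<Prod>i\<in>T. of_nat (m i) ^ e i))"
    and 2: "finite E2" "\<forall>e\<in>E2. \<forall>i. i \<notin> T \<longrightarrow> e i = 0"
      "\<forall>m. g m = (\<Sum>e\<in>E2. c2 e * (\<Prod>i\<in>T. of_nat (m i) ^ e i))"
    unfolding polyE_def by blast
  show ?case unfolding polyE_def
  proof (intro exI[of _ "E1 \<union> E2"] exI[of _ "\<lambda>e. (if e \<in> E1 then c1 e else 0) + (if e \<in> E2 then c2 e else 0)"] conjI allI)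
    fix m
    have "f m + g m = (\<Sum>e\<in>E1 \<union> E2. (if e \<in> E1 then c1 e else 0) * (\<Prod>i\<in>T. of_nat (m i) ^ e i))
       + (\<Sum>e\<in>E1 \<union> E2. (if e \<in> E2 then c2 e else 0) * (\<Prod>i\<in>T. of_nat (m i) ^ e i))"
      using 1 2 by (simp add: sum_if_sub)
    then show "f m + g m = (\<Sum>e\<in>E1 \<union> E2. ((if e \<in> E1 then c1 e else 0) + (if e \<in> E2 then c2 e else 0)) * (\<Prod>i\<in>T. of_nat (m i) ^ e i))"
      by (simp add: sum.distrib distrib_right)
  qed (use 1 2 in auto)
next
  case (pf_var f j)
  then obtain E c where 1: "finite E" "\<forall>e\<in>E. \<forall>i. i \<notin> T \<longrightarrow> e i = 0"
      "\<forall>m. f m = (\<Sum>e\<in>E. c e * (\<Prod>i\<in>T. of_nat (m i) ^ e i))"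
    unfolding polyE_def by blast
  define sh where "sh = (\<lambda>e::nat\<Rightarrow>nat. e(j := Suc (e j)))"
  have inj: "inj sh" unfolding sh_def inj_def
    by (metis fun_upd_apply fun_upd_triv fun_upd_upd nat.inject)
  have shb: "(sh e)(j := sh e j - Suc 0) = e" for e unfolding sh_def by simp
  have prod_sh: "(\<Prod>i\<in>T. of_nat (m i) ^ sh e i) = of_nat (m j) * (\<Prod>i\<in>T. (of_nat (m i) :: rat) ^ e i)" for m e
  proof -
    have "(\<Prod>i\<in>T. (of_nat (m i) :: rat) ^ sh e i) = of_nat (m j) ^ sh e j * (\<Prod>i\<in>T - {j}. of_nat (m i) ^ sh e i)"
      using pf_var.prems pf_var.hyps by (simp add: prod.remove)
    also have "(\<Prod>i\<in>T - {j}. (of_nat (m i) :: rat) ^ sh e i) = (\<Prod>i\<in>T - {j}. of_nat (m i) ^ e i)"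
      unfolding sh_def by (intro prod.cong) auto
    also have "(\<Prod>i\<in>T. (of_nat (m i) :: rat) ^ e i) = of_nat (m j) ^ e j * (\<Prod>i\<in>T - {j}. of_nat (m i) ^ e i)"
      using pf_var.prems pf_var.hyps by (simp add: prod.remove)
    ultimately show ?thesis unfolding sh_def by simp
  qed
  show ?case unfolding polyE_def
  proof (intro exI[of _ "sh ` E"] exI[of _ "\<lambda>e. c (e(j := e j - 1))"] conjI allI ballI impI)
    fix m
    have "(\<Sum>e\<in>sh ` E. c (e(j := e j - 1)) * (\<Prod>i\<in>T. of_nat (m i) ^ e i))
        = (\<Sum>e\<in>E. c e * (\<Prod>i\<in>T. of_nat (m i) ^ sh e i))"
      by (subst sum.reindex) (use inj in \<open>auto simp: shb inj_on_def inj_def\<close>)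
    also have "\<dots> = of_nat (m j) * f m" using 1(3) by (simp add: prod_sh sum_distrib_left algebra_simps)
    finally show "of_nat (m j) * f m = (\<Sum>e\<in>sh ` E. c (e(j := e j - 1)) * (\<Prod>i\<in>T. of_nat (m i) ^ e i))" by simp
  next
    fix e i assume "e \<in> sh ` E" "i \<notin> T"
    then show "e i = 0" using 1(2) pf_var.hyps unfolding sh_def by auto
  qed (use 1 in auto)
qed

lemma polyE_poly: assumes "finite T" "polyE T f" shows "poly_fun_on T f"
proof -
  obtain E c where 1: "finite E" "\<forall>e\<in>E. \<forall>i. i \<notin> T \<longrightarrow> e i = 0"
      "\<forall>m. f m = (\<Sum>e\<in>E. c e * (\<Prod>i\<in>T. of_nat (m i) ^ e i))"
    using assms(2) unfolding polyE_def by blast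
  define d where "d = (\<Sum>e\<in>E. \<Sum>i\<in>T. e i)"
  define B where "B = {e. (\<forall>i. i \<notin> T \<longrightarrow> e i = 0) \<and> (\<forall>i\<in>T. e i \<le> d)}"
  have "B \<subseteq> (\<lambda>g i. if i \<in> T then g i else 0) ` (T \<rightarrow>\<^sub>E {..d})"
  proof
    fix e assume "e \<in> B"
    then have "e = (\<lambda>i. if i \<in> T then restrict e T i else 0)" "restrict e T \<in> T \<rightarrow>\<^sub>E {..d}"
      unfolding B_def by auto
    then show "e \<in> (\<lambda>g i. if i \<in> T then g i else 0) ` (T \<rightarrow>\<^sub>E {..d})" by blast
  qed
  then have finB: "finite B" using assms(1) by (meson finite_PiE finite_atMost finite_imageI finite_subset)
  have sub: "E \<subseteq> B"
  proof
    fix e assume e: "e \<in> E"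
    have "e i \<le> d" if "i \<in> T" for i
    proof -
      have "e i \<le> (\<Sum>i\<in>T. e i)" using that assms(1) by (simp add: member_le_sum)
      also have "\<dots> \<le> d" unfolding d_def using e 1(1) by (intro member_le_sum) auto
      finally show ?thesis .
    qed
    then show "e \<in> B" using 1(2) e unfolding B_def by auto
  qed
  show ?thesis unfolding poly_fun_on_def
    by (rule exI[of _ d], rule exI[of _ "\<lambda>e. if e \<in> E then c e else 0"])
       (use 1(3) sum_if_sub[OF finB sub] in \<open>simp add: B_def\<close>)
qed

lemma pf_poly: "finite T \<Longrightarrow> pf T f \<Longrightarrow> poly_fun_on T f"
  using pf_polyE polyE_poly by blast



definition pc :: "nat set \<Rightarrow> (nat \<Rightarrow> nat) set \<Rightarrow> ((nat \<Rightarrow> nat) \<Rightarrow> rat) \<Rightarrow> bool" where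
  "pc T D h \<longleftrightarrow> (\<exists>g. pf T g \<and> (\<forall>v\<in>D. h v = g v))"

lemma pc_add: assumes "pc T D f" "pc T D g" shows "pc T D (\<lambda>v. f v + g v)"
proof -
  obtain f' where f': "pf T f'" "\<forall>v\<in>D. f v = f' v" using assms(1) unfolding pc_def by blast
  obtain g' where g': "pf T g'" "\<forall>v\<in>D. g v = g' v" using assms(2) unfolding pc_def by blast
  show ?thesis unfolding pc_def
    by (rule exI[of _ "\<lambda>v. f' v + g' v"]) (simp add: f' g' pf_add)
qed

lemma pc_sum: "finite A \<Longrightarrow> (\<And>a. a \<in> A \<Longrightarrow> pc T D (f a)) \<Longrightarrow> pc T D (\<lambda>v. \<Sum>a\<in>A. f a v)"
proof (induction A rule: finite_induct)
  case empty then show ?case unfolding pc_def using pf_const[of T 0] by (intro exI[of _ "\<lambda>m. 0"]) simp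
next
  case (insert x F)
  then have "pc T D (\<lambda>v. f x v + (\<Sum>a\<in>F. f a v))" by (intro pc_add) auto
  then show ?case using insert by simp
qed

lemma pc_cong: "pc T D g \<Longrightarrow> (\<And>v. v \<in> D \<Longrightarrow> f v = g v) \<Longrightarrow> pc T D f"
  unfolding pc_def by auto

lemma pc_sub: "pc T D f \<Longrightarrow> D' \<subseteq> D \<Longrightarrow> pc T D' f"
  unfolding pc_def by auto

lemma pc_cmul:
  assumes "pc T D f" "\<forall>v\<in>D. \<forall>v'\<in>D. k v = k v'"
  shows "pc T D (\<lambda>v. k v * f v)"
proof (cases "D = {}")
  case True then show ?thesis unfolding pc_def using pf_const[of T 0] by (intro exI[of _ "\<lambda>m. 0"]) simp
next
  case False
  then obtain v0 where v0: "v0 \<in> D" by blast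
  obtain g where g: "pf T g" "\<forall>v\<in>D. f v = g v" using assms(1) unfolding pc_def by blast
  have "\<forall>v\<in>D. k v * f v = k v0 * g v" using g v0 assms(2) by metis
  then show ?thesis unfolding pc_def using pf_scale[OF g(1), of "k v0"] by blast
qed

lemma parity_sum:
  assumes "finite A" "\<forall>j\<in>A. odd (v j) = odd (v' j)"
  shows "((-1::rat) ^ (\<Sum>j\<in>A. v j)) = (-1) ^ (\<Sum>j\<in>A. v' j)"
proof -
  have "even (\<Sum>j\<in>A. v j) = even (\<Sum>j\<in>A. v' j)"
    using assms
  proof (induction A rule: finite_induct)
    case empty then show ?case by simp
  next
    case (insert x F)
    then have "even (\<Sum>j\<in>F. v j) = even (\<Sum>j\<in>F. v' j)" "odd (v x) = odd (v' x)" by auto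
    then show ?case using insert(1,2) by simp
  qed
  then show ?thesis by (simp add: minus_one_power_iff)
qed

lemma split_sum: "(\<Sum>t\<in>{1..a}. f t) = (\<Sum>r<a div 2. f (2*r+2)) + (\<Sum>r<(a+1) div 2. f (2*r+1 :: nat)) "
proof (induction a)
  case 0 then show ?case by simp
next
  case (Suc a)
  have ins: "{1..Suc a} = insert (Suc a) {1..a}" by auto
  have "(\<Sum>t\<in>{1..Suc a}. f t) = f (Suc a) + (\<Sum>t\<in>{1..a}. f t)" unfolding ins by simp
  show ?case
  proof (cases "even a")
    case True
    then have "Suc a div 2 = a div 2" "(Suc a + 1) div 2 = Suc ((a + 1) div 2)" "2 * ((a+1) div 2) + 1 = Suc a"
      by presburger+
    then show ?thesis using Suc ins by (simp add: ac_simps)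
  next
    case False
    then have "Suc a div 2 = Suc (a div 2)" "(Suc a + 1) div 2 = (a + 1) div 2" "2 * (a div 2) + 2 = Suc a"
      by presburger+
    then show ?thesis using Suc ins by (simp add: ac_simps)
  qed
qed



lemma eps_pow: "(\<epsilon>::rat) = 1 \<or> \<epsilon> = -1 \<Longrightarrow> \<epsilon> ^ k = (if even k then 1 else \<epsilon>)"
  by (auto simp: minus_one_power_iff)

lemma unroll_closed:
  fixes F h :: "(nat \<Rightarrow> nat) \<Rightarrow> rat"
  assumes closed: "\<forall>v\<in>C. \<forall>x. v(s:=x) \<in> C"
    and rec: "\<forall>v\<in>C. 0 < v s \<longrightarrow> F v = \<epsilon> * F (v(s := v s - 1)) + h v"
  shows "v \<in> C \<Longrightarrow> F v = \<epsilon> ^ (v s) * F (v(s:=0)) + (\<Sum>t\<in>{1..v s}. \<epsilon> ^ (v s - t) * h (v(s:=t)))"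
proof (induction "v s" arbitrary: v)
  case 0
  then have "v(s:=0) = v" by (metis fun_upd_triv)
  then show ?case using 0 by simp
next
  case (Suc b)
  let ?u = "v(s:=b)"
  have u: "?u \<in> C" "?u s = b" using closed Suc.prems by auto
  have IH: "F ?u = \<epsilon> ^ b * F (v(s:=0)) + (\<Sum>t\<in>{1..b}. \<epsilon> ^ (b - t) * h (v(s:=t)))"
    using Suc.hyps(1)[of ?u] u by simp
  have r: "F v = \<epsilon> * F ?u + h v" using rec Suc.prems Suc.hyps(2)[symmetric] by (metis diff_Suc_1 zero_less_Suc)
  have ins: "{1..Suc b} = insert (Suc b) {1..b}" by auto
  have vv: "v(s := Suc b) = v" using Suc.hyps(2) by (metis fun_upd_triv)
  have S1: "(\<Sum>t\<in>{1..Suc b}. \<epsilon> ^ (Suc b - t) * h (v(s:=t))) = \<epsilon> ^ 0 * h (v(s:=Suc b)) + (\<Sum>t\<in>{1..b}. \<epsilon> ^ (Suc b - t) * h (v(s:=t)))"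
    unfolding ins by (subst sum.insert) auto
  have S2: "(\<Sum>t\<in>{1..b}. \<epsilon> ^ (Suc b - t) * h (v(s:=t))) = \<epsilon> * (\<Sum>t\<in>{1..b}. \<epsilon> ^ (b - t) * h (v(s:=t)))"
    unfolding sum_distrib_left by (intro sum.cong refl) (simp add: Suc_diff_le mult.assoc)
  have S: "(\<Sum>t\<in>{1..Suc b}. \<epsilon> ^ (Suc b - t) * h (v(s:=t))) = h v + \<epsilon> * (\<Sum>t\<in>{1..b}. \<epsilon> ^ (b - t) * h (v(s:=t)))"
    unfolding S1 S2 vv by simp
  show ?case unfolding r IH Suc.hyps(2)[symmetric] S by (simp add: algebra_simps)
qed

lemma unroll:
  fixes F h :: "(nat \<Rightarrow> nat) \<Rightarrow> rat"
  assumes sT: "s \<in> T"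
    and closed: "\<forall>v\<in>C. \<forall>x. v(s:=x) \<in> C"
    and eps: "\<epsilon> = 1 \<or> \<epsilon> = -1"
    and rec: "\<forall>v\<in>C. 0 < v s \<longrightarrow> F v = \<epsilon> * F (v(s := v s - 1)) + h v"
    and hpp: "\<And>q. pc T {v\<in>C. odd (v s) = q} h"
    and base: "pc T C (\<lambda>v. F (v(s:=0)))"
  shows "pc T {v\<in>C. odd (v s) = q} F"
proof -
  obtain g0 where g0: "pf T g0" "\<forall>v\<in>C. F (v(s:=0)) = g0 v" using base unfolding pc_def by blast
  obtain ge where ge: "pf T ge" "\<forall>v\<in>C. even (v s) \<longrightarrow> h v = ge v" using hpp[of False] unfolding pc_def by auto
  obtain go where go: "pf T go" "\<forall>v\<in>C. odd (v s) \<longrightarrow> h v = go v" using hpp[of True] unfolding pc_def by auto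
  define \<beta>e :: rat where "\<beta>e = (if q then - 1/2 else 0)"
  define \<beta>o :: rat where "\<beta>o = (if q then 1/2 else 0)"
  obtain Ge where Ge: "pf T Ge" "\<forall>v K. of_nat K = 1/2 * of_nat (v s) + \<beta>e \<longrightarrow> Ge v = (\<Sum>r<K. ge (v(s := 2*r + 2)))"
    using faul_aff[OF ge(1) sT, of "1/2" \<beta>e 2] by blast
  obtain Go where Go: "pf T Go" "\<forall>v K. of_nat K = 1/2 * of_nat (v s) + \<beta>o \<longrightarrow> Go v = (\<Sum>r<K. go (v(s := 2*r + 1)))"
    using faul_aff[OF go(1) sT, of "1/2" \<beta>o 1] by blast
  define ce :: rat where "ce = (if q then \<epsilon> else 1)"
  define co :: rat where "co = (if q then 1 else \<epsilon>)"
  have pfG: "pf T (\<lambda>v. ce * g0 v + (ce * Ge v + co * Go v))"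
    by (intro pf_add pf_scale g0(1) Ge(1) Go(1))
  have "F v = ce * g0 v + (ce * Ge v + co * Go v)" if v: "v \<in> C" "odd (v s) = q" for v
  proof -
    let ?a = "v s"
    have cl: "F v = \<epsilon> ^ ?a * F (v(s:=0)) + (\<Sum>t\<in>{1..?a}. \<epsilon> ^ (?a - t) * h (v(s:=t)))"
      by (rule unroll_closed[OF closed rec v(1)])
    have p1: "\<epsilon> ^ ?a = ce" using eps_pow[OF eps] v(2) unfolding ce_def by auto
    have sp: "(\<Sum>t\<in>{1..?a}. \<epsilon> ^ (?a - t) * h (v(s:=t)))
        = (\<Sum>r<?a div 2. \<epsilon> ^ (?a - (2*r+2)) * h (v(s:=2*r+2))) + (\<Sum>r<(?a+1) div 2. \<epsilon> ^ (?a - (2*r+1)) * h (v(s:=2*r+1)))"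
      by (rule split_sum)
    have e1: "(\<Sum>r<?a div 2. \<epsilon> ^ (?a - (2*r+2)) * h (v(s:=2*r+2))) = ce * (\<Sum>r<?a div 2. ge (v(s:=2*r+2)))"
      unfolding sum_distrib_left
    proof (intro sum.cong refl)
      fix r assume "r \<in> {..<?a div 2}"
      then have "2*r+2 \<le> ?a" by auto
      then have "even (?a - (2*r+2)) = even ?a" by auto
      moreover have "h (v(s:=2*r+2)) = ge (v(s:=2*r+2))" using ge(2) closed v(1) by simp
      ultimately show "\<epsilon> ^ (?a - (2*r+2)) * h (v(s:=2*r+2)) = ce * ge (v(s:=2*r+2))"
        using eps_pow[OF eps] v(2) unfolding ce_def by auto
    qed
    have e2: "(\<Sum>r<(?a+1) div 2. \<epsilon> ^ (?a - (2*r+1)) * h (v(s:=2*r+1))) = co * (\<Sum>r<(?a+1) div 2. go (v(s:=2*r+1)))"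
      unfolding sum_distrib_left
    proof (intro sum.cong refl)
      fix r assume "r \<in> {..<(?a+1) div 2}"
      then have "2*r+1 \<le> ?a" by auto
      then have "even (?a - (2*r+1)) = odd ?a" by auto
      moreover have "h (v(s:=2*r+1)) = go (v(s:=2*r+1))" using go(2) closed v(1) by simp
      ultimately show "\<epsilon> ^ (?a - (2*r+1)) * h (v(s:=2*r+1)) = co * go (v(s:=2*r+1))"
        using eps_pow[OF eps] v(2) unfolding co_def by auto
    qed
    have k1: "of_nat (?a div 2) = 1/2 * of_nat ?a + \<beta>e"
    proof (cases q)
      case True
      then have "?a = 2 * (?a div 2) + 1" using v(2) by presburger
      then have "(of_nat ?a :: rat) = 2 * of_nat (?a div 2) + 1" by (metis of_nat_1 of_nat_add of_nat_mult of_nat_numeral)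
      then show ?thesis unfolding \<beta>e_def using True by (simp add: field_simps)
    next
      case False
      then have "?a = 2 * (?a div 2)" using v(2) by presburger
      then have "(of_nat ?a :: rat) = 2 * of_nat (?a div 2)" by (metis of_nat_mult of_nat_numeral)
      then show ?thesis unfolding \<beta>e_def using False by (simp add: field_simps)
    qed
    have k2: "of_nat ((?a+1) div 2) = 1/2 * of_nat ?a + \<beta>o"
    proof (cases q)
      case True
      then have "?a + 1 = 2 * ((?a+1) div 2)" using v(2) by presburger
      then have "(of_nat ?a :: rat) + 1 = 2 * of_nat ((?a+1) div 2)" by (metis of_nat_1 of_nat_add of_nat_mult of_nat_numeral)
      then show ?thesis unfolding \<beta>o_def using True by (simp add: field_simps)
    next
      case False
      then have "(?a+1) div 2 = ?a div 2" "?a = 2 * (?a div 2)" using v(2) by presburger+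
      then have "(of_nat ?a :: rat) = 2 * of_nat ((?a+1) div 2)" by (metis of_nat_mult of_nat_numeral)
      then show ?thesis unfolding \<beta>o_def using False by (simp add: field_simps)
    qed
    show ?thesis
      unfolding cl p1 sp e1 e2 using g0(2) v(1) Ge(2) k1 Go(2) k2 by simp
  qed
  then show ?thesis unfolding pc_def using pfG by blast
qed



locale lsum =
  fixes le :: "nat \<Rightarrow> nat \<Rightarrow> bool" and n :: nat and S :: "nat set"
  assumes refl: "\<forall>i<n. le i i"
      and antisym: "\<forall>i<n. \<forall>j<n. le i j \<and> le j i \<longrightarrow> i = j"
      and trans: "\<forall>i<n. \<forall>j<n. \<forall>k<n. le i j \<and> le j k \<longrightarrow> le i k"
      and S_sub: "S \<subseteq> {0..<n}"
      and S_chain: "\<forall>i\<in>S. \<forall>j\<in>S. le i j \<or> le j i"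
begin

definition mu :: "nat set \<Rightarrow> (nat \<Rightarrow> nat) \<Rightarrow> nat" where
  "mu T w = (\<Sum>i\<in>{0..<n} - T. w i)"

definition claim :: "nat set \<Rightarrow> (nat \<Rightarrow> nat) \<Rightarrow> (nat \<Rightarrow> bool) \<Rightarrow> bool" where
  "claim T w p \<longleftrightarrow> pc T {v. (\<forall>i. i \<notin> T \<longrightarrow> v i = w i) \<and> (\<forall>i\<in>T. odd (v i) = p i)}
      (\<lambda>v. of_int (L_minus le n v))"

lemma max_ex: "T \<subseteq> S \<Longrightarrow> T \<noteq> {} \<Longrightarrow> \<exists>s\<in>T. \<forall>t\<in>T. le t s"
proof -
  assume TS: "T \<subseteq> S" and ne: "T \<noteq> {}"
  have fin: "finite T" using TS S_sub by (meson finite_atLeastLessThan finite_subset)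
  show ?thesis using fin ne TS
  proof (induction T rule: finite_ne_induct)
    case (singleton x)
    then have "x < n" using S_sub by auto
    then have "le x x" using refl by simp
    then show ?case by simp
  next
    case (insert x F)
    then have "F \<subseteq> S" by simp
    then obtain s where s: "s \<in> F" "\<forall>t\<in>F. le t s" using insert.IH by blast
    have xs: "x \<in> S" "s \<in> S" using insert.prems s(1) by auto
    then have xn: "x < n" "s < n" using S_sub by auto
    show ?case
    proof (cases "le s x")
      case True
      have "\<forall>t\<in>insert x F. le t x"
      proof
        fix t assume t: "t \<in> insert x F"
        show "le t x"
        proof (cases "t = x")
          case True then show ?thesis using refl xn by simp
        next
          case False
          then have tF: "t \<in> F" using t by simp
          then have "t < n" using insert.prems S_sub by auto
          moreover have "le t s" using s(2) tF by simp
          ultimately show ?thesis using trans xn \<open>le s x\<close> by metis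
        qed
      qed
      then show ?thesis by blast
    next
      case False
      then have "le x s" using S_chain xs by metis
      moreover have "\<forall>t\<in>F. le t s" using s by simp
      ultimately have "\<forall>t\<in>insert x F. le t s" by simp
      then show ?thesis using s(1) by blast
    qed
  qed
qed

lemma L_rec_q:
  assumes "\<exists>i<n. 0 < m i"
  shows "(of_int (L_minus le n m) :: rat) = (\<Sum>i\<in>{i. i < n \<and> 0 < m i \<and> (\<forall>j<n. j \<noteq> i \<and> 0 < m j \<longrightarrow> \<not> le i j)}.
            (-1) ^ (\<Sum>j\<in>{i<..<n}. m j) * of_int (L_minus le n (m(i := m i - 1))))"
  unfolding L_rec[OF assms] by (simp add: of_int_sum)

lemma mu_dec:
  assumes "i < n" "i \<notin> T" "0 < w i"
  shows "mu T (w(i := w i - 1)) < mu T w"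
proof -
  have iA: "i \<in> {0..<n} - T" using assms by auto
  have fin: "finite ({0..<n} - T)" by simp
  have "mu T w = w i + (\<Sum>j\<in>{0..<n} - T - {i}. w j)" unfolding mu_def using sum.remove[OF fin iA] .
  moreover have "mu T (w(i := w i - 1)) = (w(i := w i - 1)) i + (\<Sum>j\<in>{0..<n} - T - {i}. (w(i := w i - 1)) j)"
    unfolding mu_def using sum.remove[OF fin iA] .
  moreover have "(\<Sum>j\<in>{0..<n} - T - {i}. (w(i := w i - 1)) j) = (\<Sum>j\<in>{0..<n} - T - {i}. w j)"
    by (intro sum.cong) auto
  ultimately show ?thesis using assms(3) by simp
qed

end



context lsum begin

lemma tr: "i < n \<Longrightarrow> j < n \<Longrightarrow> k < n \<Longrightarrow> le i j \<Longrightarrow> le j k \<Longrightarrow> le i k"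
  using trans by blast

lemma asy: "i < n \<Longrightarrow> j < n \<Longrightarrow> le i j \<Longrightarrow> le j i \<Longrightarrow> i = j"
  using antisym by blast

lemma Tn: "T \<subseteq> S \<Longrightarrow> t \<in> T \<Longrightarrow> t < n" using S_sub by auto

lemma pc_shift:
  assumes cl: "claim T w' p'" and iT: "i \<notin> T"
    and mem: "\<And>v. v \<in> D \<Longrightarrow> v(i := v i - 1) \<in> {u. (\<forall>k. k \<notin> T \<longrightarrow> u k = w' k) \<and> (\<forall>k\<in>T. odd (u k) = p' k)}"
  shows "pc T D (\<lambda>v. of_int (L_minus le n (v(i := v i - 1))))"
proof -
  obtain g where g: "pf T g" "\<forall>u\<in>{u. (\<forall>k. k \<notin> T \<longrightarrow> u k = w' k) \<and> (\<forall>k\<in>T. odd (u k) = p' k)}. of_int (L_minus le n u) = g u"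
    using cl unfolding claim_def pc_def by blast
  have "of_int (L_minus le n (v(i := v i - 1))) = g v" if "v \<in> D" for v
  proof -
    have "of_int (L_minus le n (v(i := v i - 1))) = g (v(i := v i - 1))" using g(2) mem[OF that] by blast
    also have "\<dots> = g v" by (rule pf_dep[OF g(1)]) (use iT in auto)
    finally show ?thesis .
  qed
  then show ?thesis unfolding pc_def using g(1) by blast
qed

lemma blocked_case:
  assumes TS: "T \<subseteq> S" and sT: "s \<in> T" and smax: "\<forall>t\<in>T. le t s"
    and blk: "j0 < n" "j0 \<notin> T" "0 < w j0" "le s j0"
    and IH: "\<And>w' p'. mu T w' < mu T w \<Longrightarrow> claim T w' p'"
  shows "claim T w p"
proof -
  define D where "D = {v. (\<forall>i. i \<notin> T \<longrightarrow> v i = w i) \<and> (\<forall>i\<in>T. odd (v i) = p i)}"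
  define I where "I = {i. i < n \<and> i \<notin> T \<and> 0 < w i \<and> (\<forall>j<n. j \<notin> T \<and> j \<noteq> i \<and> 0 < w j \<longrightarrow> \<not> le i j)}"
  have sn: "s < n" using Tn[OF TS sT] .
  have Mx: "{i. i < n \<and> 0 < v i \<and> (\<forall>j<n. j \<noteq> i \<and> 0 < v j \<longrightarrow> \<not> le i j)} = I" if v: "v \<in> D" for v
  proof
    have vw: "\<And>i. i \<notin> T \<Longrightarrow> v i = w i" using v unfolding D_def by blast
    show "{i. i < n \<and> 0 < v i \<and> (\<forall>j<n. j \<noteq> i \<and> 0 < v j \<longrightarrow> \<not> le i j)} \<subseteq> I"
    proof
      fix i assume "i \<in> {i. i < n \<and> 0 < v i \<and> (\<forall>j<n. j \<noteq> i \<and> 0 < v j \<longrightarrow> \<not> le i j)}"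
      then have i: "i < n" "0 < v i" "\<forall>j<n. j \<noteq> i \<and> 0 < v j \<longrightarrow> \<not> le i j" by auto
      have iT: "i \<notin> T"
      proof
        assume iT: "i \<in> T"
        then have "le i s" using smax by blast
        then have "le i j0" using tr[OF i(1) sn blk(1) _ blk(4)] by simp
        moreover have "j0 \<noteq> i" using iT blk(2) by blast
        moreover have "0 < v j0" using vw[OF blk(2)] blk(3) by simp
        ultimately show False using i(3) blk(1) by blast
      qed
      have "\<forall>j<n. j \<notin> T \<and> j \<noteq> i \<and> 0 < w j \<longrightarrow> \<not> le i j" using i(3) vw by auto
      then show "i \<in> I" unfolding I_def using i(1,2) iT vw by auto
    qed
    show "I \<subseteq> {i. i < n \<and> 0 < v i \<and> (\<forall>j<n. j \<noteq> i \<and> 0 < v j \<longrightarrow> \<not> le i j)}"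
    proof
      fix i assume "i \<in> I"
      then have i: "i < n" "i \<notin> T" "0 < w i" "\<forall>j<n. j \<notin> T \<and> j \<noteq> i \<and> 0 < w j \<longrightarrow> \<not> le i j"
        unfolding I_def by auto
      have "\<not> le i j" if j: "j < n" "j \<noteq> i" "0 < v j" for j
      proof
        assume lij: "le i j"
        show False
        proof (cases "j \<in> T")
          case False
          then show False using i(4) j vw[OF False] lij by auto
        next
          case True
          then have "le j s" using smax by blast
          then have lis: "le i s" using tr[OF i(1) j(1) sn lij] by simp
          then have lij0: "le i j0" using tr[OF i(1) sn blk(1) _ blk(4)] by simp
          have "j0 \<noteq> i"
          proof
            assume "j0 = i"
            then have "le s i" using blk(4) by simp
            then have "le j i" using tr[OF j(1) sn i(1) \<open>le j s\<close>] by simp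
            then have "i = j" using asy[OF i(1) j(1) lij] by simp
            then show False using True i(2) by simp
          qed
          then show False using i(4) blk lij0 by blast
        qed
      qed
      then show "i \<in> {i. i < n \<and> 0 < v i \<and> (\<forall>j<n. j \<noteq> i \<and> 0 < v j \<longrightarrow> \<not> le i j)}"
        using i(1,2,3) vw by auto
    qed
  qed
  have finI: "finite I" unfolding I_def by simp
  have trm: "pc T D (\<lambda>v. (-1) ^ (\<Sum>j\<in>{i<..<n}. v j) * of_int (L_minus le n (v(i := v i - 1))))"
    if iI: "i \<in> I" for i
  proof (rule pc_cmul)
    have i: "i < n" "i \<notin> T" "0 < w i" using iI unfolding I_def by auto
    have cl: "claim T (w(i := w i - 1)) p" by (rule IH[OF mu_dec[of i T w, OF i]])
    show "pc T D (\<lambda>v. of_int (L_minus le n (v(i := v i - 1))))"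
    proof (rule pc_shift[OF cl i(2)])
      fix v assume "v \<in> D"
      then show "v(i := v i - 1) \<in> {u. (\<forall>k. k \<notin> T \<longrightarrow> u k = (w(i := w i - 1)) k) \<and> (\<forall>k\<in>T. odd (u k) = p k)}"
        unfolding D_def using i(2) by auto
    qed
    show "\<forall>v\<in>D. \<forall>v'\<in>D. (-1::rat) ^ (\<Sum>j\<in>{i<..<n}. v j) = (-1) ^ (\<Sum>j\<in>{i<..<n}. v' j)"
    proof (intro ballI)
      fix v v' assume "v \<in> D" "v' \<in> D"
      then have "(\<forall>i. i \<notin> T \<longrightarrow> v i = w i) \<and> (\<forall>i\<in>T. odd (v i) = p i)"
        "(\<forall>i. i \<notin> T \<longrightarrow> v' i = w i) \<and> (\<forall>i\<in>T. odd (v' i) = p i)" unfolding D_def by auto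
      then have "odd (v j) = odd (v' j)" for j by (cases "j \<in> T") auto
      then show "(-1::rat) ^ (\<Sum>j\<in>{i<..<n}. v j) = (-1) ^ (\<Sum>j\<in>{i<..<n}. v' j)"
        by (intro parity_sum) auto
    qed
  qed
  have "pc T D (\<lambda>v. \<Sum>i\<in>I. (-1) ^ (\<Sum>j\<in>{i<..<n}. v j) * of_int (L_minus le n (v(i := v i - 1))))"
    by (rule pc_sum[OF finI trm])
  then have "pc T D (\<lambda>v. of_int (L_minus le n v))"
  proof (rule pc_cong)
    fix v assume v: "v \<in> D"
    have sup: "\<exists>i<n. 0 < v i" using blk v unfolding D_def by auto
    show "(of_int (L_minus le n v) :: rat) = (\<Sum>i\<in>I. (-1) ^ (\<Sum>j\<in>{i<..<n}. v j) * of_int (L_minus le n (v(i := v i - 1))))"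
      using L_rec_q[OF sup] unfolding Mx[OF v] .
  qed
  then show ?thesis unfolding claim_def D_def .
qed

end


context lsum begin

lemma unblocked_case:
  assumes TS: "T \<subseteq> S" and sT: "s \<in> T" and smax: "\<forall>t\<in>T. le t s"
    and nb: "\<forall>j<n. j \<notin> T \<and> 0 < w j \<longrightarrow> \<not> le s j"
    and IH: "\<And>w' p'. mu T w' < mu T w \<Longrightarrow> claim T w' p'"
    and IH0: "claim (T - {s}) (w(s:=0)) p"
  shows "claim T w p"
proof -
  define T' where "T' = T - {s}"
  define C where "C = {v. (\<forall>i. i \<notin> T \<longrightarrow> v i = w i) \<and> (\<forall>i\<in>T'. odd (v i) = p i)}"
  define D where "D = {v. (\<forall>i. i \<notin> T \<longrightarrow> v i = w i) \<and> (\<forall>i\<in>T. odd (v i) = p i)}"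
  let ?L = "\<lambda>v. (of_int (L_minus le n v) :: rat)"
  have sn: "s < n" using Tn[OF TS sT] .
  have DC: "D = {v\<in>C. odd (v s) = p s}"
    unfolding D_def C_def T'_def using sT by auto
  have Cw: "v i = w i" if "v \<in> C" "i \<notin> T" for v i using that unfolding C_def by blast
  have Cp: "odd (v i) = p i" if "v \<in> C" "i \<in> T" "i \<noteq> s" for v i using that unfolding C_def T'_def by blast
  have par: "odd (v j) = odd (v' j)" if "v \<in> C" "v' \<in> C" "j \<noteq> s" for v v' j
  proof (cases "j \<in> T")
    case True then show ?thesis using that Cp by simp
  next
    case False then show ?thesis using Cw[OF that(1) False] Cw[OF that(2) False] by simp
  qed
  show ?thesis
  proof (cases "C = {}")
    case True
    then have "D = {}" unfolding DC by simp
    then show ?thesis unfolding claim_def D_def[symmetric] pc_def using pf_const[of T 0] by (intro exI[of _ "\<lambda>m. 0"]) simp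
  next
    case False
    then obtain v0 where v0: "v0 \<in> C" by blast
    define \<epsilon> :: rat where "\<epsilon> = (-1) ^ (\<Sum>j\<in>{s<..<n}. v0 j)"
    define I' where "I' = {i. i < n \<and> i \<notin> T \<and> 0 < w i \<and> (\<forall>j<n. j \<notin> T \<and> j \<noteq> i \<and> 0 < w j \<longrightarrow> \<not> le i j) \<and> \<not> le i s}"
    define h where "h = (\<lambda>v. \<Sum>i\<in>I'. (-1) ^ (\<Sum>j\<in>{i<..<n}. v j) * ?L (v(i := v i - 1)))"
    have finI: "finite I'" unfolding I'_def by simp
    have sI: "s \<notin> I'" unfolding I'_def using sT by simp
    have eps: "\<epsilon> = 1 \<or> \<epsilon> = -1" unfolding \<epsilon>_def by (simp add: minus_one_power_iff)
    have closed: "\<forall>v\<in>C. \<forall>x. v(s:=x) \<in> C" unfolding C_def T'_def using sT by auto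
    have Mx: "{i. i < n \<and> 0 < v i \<and> (\<forall>j<n. j \<noteq> i \<and> 0 < v j \<longrightarrow> \<not> le i j)} = insert s I'"
      if v: "v \<in> C" "0 < v s" for v
    proof
      show "{i. i < n \<and> 0 < v i \<and> (\<forall>j<n. j \<noteq> i \<and> 0 < v j \<longrightarrow> \<not> le i j)} \<subseteq> insert s I'"
      proof
        fix i assume "i \<in> {i. i < n \<and> 0 < v i \<and> (\<forall>j<n. j \<noteq> i \<and> 0 < v j \<longrightarrow> \<not> le i j)}"
        then have i: "i < n" "0 < v i" "\<forall>j<n. j \<noteq> i \<and> 0 < v j \<longrightarrow> \<not> le i j" by auto
        show "i \<in> insert s I'"
        proof (cases "i = s")
          case True then show ?thesis by simp
        next
          case False
          have iT: "i \<notin> T"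
          proof
            assume "i \<in> T"
            then have "le i s" using smax by blast
            then show False using i(3) sn False v(2) by blast
          qed
          have wi: "0 < w i" using i(2) Cw[OF v(1) iT] by simp
          have "\<forall>j<n. j \<notin> T \<and> j \<noteq> i \<and> 0 < w j \<longrightarrow> \<not> le i j" using i(3) Cw[OF v(1)] by auto
          moreover have "\<not> le i s" using i(3) sn False v(2) by blast
          ultimately show ?thesis unfolding I'_def using i(1) iT wi by blast
        qed
      qed
      show "insert s I' \<subseteq> {i. i < n \<and> 0 < v i \<and> (\<forall>j<n. j \<noteq> i \<and> 0 < v j \<longrightarrow> \<not> le i j)}"
      proof
        fix i assume iI: "i \<in> insert s I'"
        show "i \<in> {i. i < n \<and> 0 < v i \<and> (\<forall>j<n. j \<noteq> i \<and> 0 < v j \<longrightarrow> \<not> le i j)}"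
        proof (cases "i = s")
          case True
          have "\<not> le s j" if j: "j < n" "j \<noteq> s" "0 < v j" for j
          proof (cases "j \<in> T")
            case True
            then have "le j s" using smax by blast
            then show ?thesis using asy[OF sn j(1)] j(2) by blast
          next
            case False
            then show ?thesis using nb j Cw[OF v(1) False] by auto
          qed
          then show ?thesis using True sn v(2) by blast
        next
          case False
          then have i: "i < n" "i \<notin> T" "0 < w i" "\<forall>j<n. j \<notin> T \<and> j \<noteq> i \<and> 0 < w j \<longrightarrow> \<not> le i j" "\<not> le i s"
            using iI unfolding I'_def by auto
          have "\<not> le i j" if j: "j < n" "j \<noteq> i" "0 < v j" for j
          proof (cases "j \<in> T")
            case True
            then have "le j s" using smax by blast
            show ?thesis
            proof
              assume "le i j"
              then have "le i s" using tr[OF i(1) j(1) sn _ \<open>le j s\<close>] by simp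
              then show False using i(5) by simp
            qed
          next
            case False
            then show ?thesis using i(4) j Cw[OF v(1) False] by auto
          qed
          then show ?thesis using i(1,3) Cw[OF v(1) i(2)] by auto
        qed
      qed
    qed
    have rec: "\<forall>v\<in>C. 0 < v s \<longrightarrow> ?L v = \<epsilon> * ?L (v(s := v s - 1)) + h v"
    proof (intro ballI impI)
      fix v assume v: "v \<in> C" "0 < v s"
      have sup: "\<exists>i<n. 0 < v i" using sn v(2) by blast
      have sg: "((-1::rat) ^ (\<Sum>j\<in>{s<..<n}. v j)) = \<epsilon>"
        unfolding \<epsilon>_def by (rule parity_sum) (use par[OF v(1) v0] in auto)
      have "?L v = (\<Sum>i\<in>insert s I'. (-1) ^ (\<Sum>j\<in>{i<..<n}. v j) * ?L (v(i := v i - 1)))"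
        using L_rec_q[OF sup] unfolding Mx[OF v] .
      also have "\<dots> = (-1) ^ (\<Sum>j\<in>{s<..<n}. v j) * ?L (v(s := v s - 1)) + h v"
        unfolding h_def by (rule sum.insert[OF finI sI])
      finally show "?L v = \<epsilon> * ?L (v(s := v s - 1)) + h v" unfolding sg .
    qed
    have hpp: "pc T {v\<in>C. odd (v s) = q} h" for q
      unfolding h_def
    proof (rule pc_sum[OF finI])
      fix i assume iI: "i \<in> I'"
      have i: "i < n" "i \<notin> T" "0 < w i" using iI unfolding I'_def by auto
      have cl: "claim T (w(i := w i - 1)) (p(s:=q))" by (rule IH[OF mu_dec[of i T w, OF i]])
      show "pc T {v\<in>C. odd (v s) = q} (\<lambda>v. (-1) ^ (\<Sum>j\<in>{i<..<n}. v j) * ?L (v(i := v i - 1)))"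
      proof (rule pc_cmul)
        show "pc T {v\<in>C. odd (v s) = q} (\<lambda>v. ?L (v(i := v i - 1)))"
        proof (rule pc_shift[OF cl i(2)])
          fix v assume v: "v \<in> {v\<in>C. odd (v s) = q}"
          have "\<forall>k. k \<notin> T \<longrightarrow> (v(i := v i - 1)) k = (w(i := w i - 1)) k" using Cw v i(2) by auto
          moreover have "\<forall>k\<in>T. odd ((v(i := v i - 1)) k) = (p(s:=q)) k"
          proof
            fix k assume k: "k \<in> T"
            then have "k \<noteq> i" using i(2) by blast
            then show "odd ((v(i := v i - 1)) k) = (p(s:=q)) k"
              using v Cp[of v k] k by (cases "k = s") auto
          qed
          ultimately show "v(i := v i - 1) \<in> {u. (\<forall>k. k \<notin> T \<longrightarrow> u k = (w(i := w i - 1)) k) \<and> (\<forall>k\<in>T. odd (u k) = (p(s:=q)) k)}"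
            by blast
        qed
        show "\<forall>v\<in>{v\<in>C. odd (v s) = q}. \<forall>v'\<in>{v\<in>C. odd (v s) = q}. (-1::rat) ^ (\<Sum>j\<in>{i<..<n}. v j) = (-1) ^ (\<Sum>j\<in>{i<..<n}. v' j)"
        proof (intro ballI)
          fix v v' assume v: "v \<in> {v\<in>C. odd (v s) = q}" "v' \<in> {v\<in>C. odd (v s) = q}"
          have "odd (v j) = odd (v' j)" for j using par[of v v' j] v by (cases "j = s") auto
          then show "(-1::rat) ^ (\<Sum>j\<in>{i<..<n}. v j) = (-1) ^ (\<Sum>j\<in>{i<..<n}. v' j)"
            by (intro parity_sum) auto
        qed
      qed
    qed
    have base: "pc T C (\<lambda>v. ?L (v(s:=0)))"
    proof -
      obtain g0 where g0: "pf T' g0"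
        "\<forall>u\<in>{u. (\<forall>i. i \<notin> T' \<longrightarrow> u i = (w(s:=0)) i) \<and> (\<forall>i\<in>T'. odd (u i) = p i)}. ?L u = g0 u"
        using IH0 unfolding claim_def pc_def T'_def by blast
      have "?L (v(s:=0)) = g0 v" if v: "v \<in> C" for v
      proof -
        have "v(s:=0) \<in> {u. (\<forall>i. i \<notin> T' \<longrightarrow> u i = (w(s:=0)) i) \<and> (\<forall>i\<in>T'. odd (u i) = p i)}"
          using v unfolding C_def T'_def by auto
        then have "?L (v(s:=0)) = g0 (v(s:=0))" using g0(2) by blast
        also have "\<dots> = g0 v" by (rule pf_dep[OF g0(1)]) (auto simp: T'_def)
        finally show ?thesis .
      qed
      moreover have "pf T g0" using pf_mono[OF g0(1)] unfolding T'_def by blast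
      ultimately show ?thesis unfolding pc_def by blast
    qed
    have "pc T {v\<in>C. odd (v s) = p s} ?L"
      by (rule unroll[OF sT closed eps rec hpp base])
    then show ?thesis unfolding claim_def D_def[symmetric] DC .
  qed
qed

end


context lsum begin

lemma mu_zero:
  assumes "s \<in> T" "s < n"
  shows "mu (T - {s}) (w(s:=0)) = mu T w"
proof -
  have e: "{0..<n} - (T - {s}) = insert s ({0..<n} - T)" using assms by auto
  have ns: "s \<notin> {0..<n} - T" using assms by simp
  have "mu (T - {s}) (w(s:=0)) = (w(s:=0)) s + (\<Sum>i\<in>{0..<n} - T. (w(s:=0)) i)"
    unfolding mu_def e by (rule sum.insert[OF _ ns]) simp
  also have "(\<Sum>i\<in>{0..<n} - T. (w(s:=0)) i) = (\<Sum>i\<in>{0..<n} - T. w i)"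
    by (rule sum.cong) (use ns in auto)
  finally show ?thesis unfolding mu_def by simp
qed

lemma main: "T \<subseteq> S \<Longrightarrow> claim T w p"
proof -
  have "\<forall>T w p. T \<subseteq> S \<longrightarrow> mu T w = M \<longrightarrow> claim T w p" for M
  proof (induction M rule: less_induct)
    case (less M)
    note outer = less.IH
    have "\<forall>T w p. T \<subseteq> S \<longrightarrow> mu T w = M \<longrightarrow> card T = k \<longrightarrow> claim T w p" for k
    proof (induction k rule: less_induct)
      case (less k)
      show ?case
      proof (intro allI impI)
        fix T w p assume a: "T \<subseteq> S" "mu T w = M" "card T = k"
        have IH: "claim T w' p'" if "mu T w' < mu T w" for w' p'
          using outer[of "mu T w'"] that a by blast
        show "claim T w p"
        proof (cases "T = {}")
          case True
          have "pc T {v. (\<forall>i. i \<notin> T \<longrightarrow> v i = w i) \<and> (\<forall>i\<in>T. odd (v i) = p i)} (\<lambda>v. of_int (L_minus le n v))"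
            unfolding pc_def
          proof (rule exI[of _ "\<lambda>_. of_int (L_minus le n w)"], intro conjI ballI)
            show "pf T (\<lambda>_. of_int (L_minus le n w))" by (rule pf_const)
            fix v assume "v \<in> {v. (\<forall>i. i \<notin> T \<longrightarrow> v i = w i) \<and> (\<forall>i\<in>T. odd (v i) = p i)}"
            then have "v = w" using True by auto
            then show "of_int (L_minus le n v) = of_int (L_minus le n w)" by simp
          qed
          then show ?thesis unfolding claim_def .
        next
          case False
          obtain s where s: "s \<in> T" "\<forall>t\<in>T. le t s" using max_ex[OF a(1) False] by blast
          have sn: "s < n" using Tn[OF a(1) s(1)] .
          show ?thesis
          proof (cases "\<exists>j0<n. j0 \<notin> T \<and> 0 < w j0 \<and> le s j0")
            case True
            then obtain j0 where j0: "j0 < n" "j0 \<notin> T" "0 < w j0" "le s j0" by blast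
            show ?thesis by (rule blocked_case[of T s j0 w, OF a(1) s j0 IH])
          next
            case False
            then have nb: "\<forall>j<n. j \<notin> T \<and> 0 < w j \<longrightarrow> \<not> le s j" by blast
            have fT: "finite T" using a(1) S_sub by (meson finite_atLeastLessThan finite_subset)
            have c: "card (T - {s}) < k" using card_Diff1_less[OF fT s(1)] a(3) by simp
            have IH0: "claim (T - {s}) (w(s:=0)) p"
              using less.IH[OF c] a(1,2) mu_zero[OF s(1) sn] by blast
            show ?thesis by (rule unblocked_case[of T s w, OF a(1) s nb IH IH0])
          qed
        qed
      qed
    qed
    then show ?case by blast
  qed
  then show "T \<subseteq> S \<Longrightarrow> claim T w p" by blast
qed

end

theorem corollary5p3:
  fixes le :: "nat \<Rightarrow> nat \<Rightarrow> bool" and n :: nat and S :: "nat set" and m0 :: "nat \<Rightarrow> nat"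
  assumes refl: "\<forall>i<n. le i i"
      and antisym: "\<forall>i<n. \<forall>j<n. le i j \<and> le j i \<longrightarrow> i = j"
      and trans: "\<forall>i<n. \<forall>j<n. \<forall>k<n. le i j \<and> le j k \<longrightarrow> le i k"
      and S_sub: "S \<subseteq> {0..<n}"
      and S_chain: "\<forall>i\<in>S. \<forall>j\<in>S. le i j \<or> le j i"
  shows "\<exists>Q :: (nat \<Rightarrow> bool) \<Rightarrow> (nat \<Rightarrow> nat) \<Rightarrow> rat.
           (\<forall>p. poly_fun_on S (Q p)) \<and>
           (\<forall>m. (\<forall>i<n. i \<notin> S \<longrightarrow> m i = m0 i) \<longrightarrow>
                of_int (L_minus le n m) = Q (\<lambda>i. if i \<in> S then odd (m i) else False) m)"
proof -
  interpret lsum le n S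
    by (unfold_locales) (fact refl antisym trans S_sub S_chain)+
  define Dp where "Dp = (\<lambda>p. {v. (\<forall>i. i \<notin> S \<longrightarrow> v i = m0 i) \<and> (\<forall>i\<in>S. odd (v i) = p i)})"
  have "\<forall>p. \<exists>g. pf S g \<and> (\<forall>v\<in>Dp p. (of_int (L_minus le n v) :: rat) = g v)"
    using main[of S m0] unfolding claim_def pc_def Dp_def by blast
  then obtain Q where Q: "\<And>p. pf S (Q p)" "\<And>p. \<forall>v\<in>Dp p. (of_int (L_minus le n v) :: rat) = Q p v"
    by metis
  have finS: "finite S" using S_sub by (meson finite_atLeastLessThan finite_subset)
  show ?thesis
  proof (rule exI[of _ Q], intro conjI allI impI)
    fix p show "poly_fun_on S (Q p)" by (rule pf_poly[OF finS Q(1)])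
  next
    fix m assume m: "\<forall>i<n. i \<notin> S \<longrightarrow> m i = m0 i"
    define p where "p = (\<lambda>i. if i \<in> S then odd (m i) else False)"
    define v where "v = (\<lambda>i. if i \<in> S then m i else m0 i)"
    have "L_minus le n m = L_minus le n v" by (rule L_cong) (use m in \<open>simp add: v_def\<close>)
    moreover have "v \<in> Dp p" unfolding Dp_def v_def p_def by simp
    moreover have "Q p v = Q p m" by (rule pf_dep[OF Q(1)]) (simp add: v_def)
    ultimately show "of_int (L_minus le n m) = Q (\<lambda>i. if i \<in> S then odd (m i) else False) m"
      using Q(2) unfolding p_def[symmetric] by metis
  qed
qed


end
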